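(* Consider the secure distributed linearly separable computation problem with $\mathsf K_{\rm c}=1$ and $\mathsf M=\frac{\mathsf K}{\mathsf N}(\mathsf N-\mathsf N_{\rm r}+1)$. Then $$\eta^\star\ge\left\lceil\frac{\mathsf N}{\mathsf N-\mathsf N_{\rm r}+1}\right\rceil-1.$$
   Context: Problem setting. $\mathsf K,\mathsf N,\mathsf N_{\rm r},\mathsf M$ are positive integers with $\mathsf N_{\rm r}\le \mathsf N$ and $\mathsf N$ dividing $\mathsf K$. Fix a prime power $\mathsf q$ (sufficiently large) and a positive integer $\mathsf L$. Datasets $D_1,\dots,D_{\mathsf K}$ are independent; message $W_k=f_k(D_k)\in\mathbb F_{\mathsf q}^{\mathsf L}$, with $W_1,\dots,W_{\mathsf K}$ mutually independent and uniform over $\mathbb F_{\mathsf q}^{\mathsf L}$. The user wants $W_1+\cdots+W_{\mathsf K}$. A secure scheme consists of an assignment $\mathcal Z_n\subseteq[\mathsf K]$, $|\mathcal Z_n|\le\mathsf M$; a random variable $Q$ on a finite set independent of the datasets, given to all servers but not the user; transmissions $X_n=\psi_n(\{W_k:k\in\mathcal Z_n\},Q)\in\mathbb F_{\mathsf q}^{\mathsf T_n}$; decodability from $\{X_n:n\in\mathcal A\}$ for every $\mathcal A\subseteq[\mathsf N]$, $|\mathcal A|=\mathsf N_{\rm r}$; security $I(W_1,\dots,W_{\mathsf K};X_1,\dots,X_{\mathsf N}\mid W_1+\cdots+W_{\mathsf K})=0$. Communication cost $\mathsf R=\max_{|\mathcal A|=\mathsf N_{\rm r}}\sum_{n\in\mathcal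 A}\mathsf T_n/\mathsf L$; randomness size $\eta=H(Q)/\mathsf L$ ($\mathsf q$-ary units). $\mathsf R^\star$ is the minimum communication cost over secure schemes, and $\eta^\star$ is the minimum randomness size over secure schemes with $\mathsf R=\mathsf R^\star$. *)

theory Defs
  imports "HOL-Algebra.Ring" "HOL-Probability.Probability_Mass_Function" "HOL-Library.FuncSet"
begin

definition fvec :: "('f, 'm) ring_scheme \<Rightarrow> nat \<Rightarrow> 'f list set" where
  "fvec F L = {xs. length xs = L \<and> set xs \<subseteq> carrier F}"

definition vadd :: "('f, 'm) ring_scheme \<Rightarrow> 'f list \<Rightarrow> 'f list \<Rightarrow> 'f list" where
  "vadd F u v = map2 (\<lambda>a b. a \<oplus>\<^bsub>F\<^esub> b) u v"

definition msum :: "('f, 'm) ring_scheme \<Rightarrow> nat \<Rightarrow> nat \<Rightarrow> (nat \<Rightarrow> 'f list) \<Rightarrow> 'f list" where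
  "msum F K L W = foldr (\<lambda>k acc. vadd F (W k) acc) [0..<K] (replicate L \<zero>\<^bsub>F\<^esub>)"

definition msgspace :: "('f, 'm) ring_scheme \<Rightarrow> nat \<Rightarrow> nat \<Rightarrow> (nat \<Rightarrow> 'f list) set" where
  "msgspace F K L = PiE {..<K} (\<lambda>_. fvec F L)"

definition ent :: "real \<Rightarrow> 'a pmf \<Rightarrow> real" where
  "ent b p = - (\<Sum>x\<in>set_pmf p. pmf p x * log b (pmf p x))"

definition H :: "real \<Rightarrow> 'w pmf \<Rightarrow> ('w \<Rightarrow> 'a) \<Rightarrow> real" where
  "H b \<mu> X = ent b (map_pmf X \<mu>)"

definition cmi :: "real \<Rightarrow> 'w pmf \<Rightarrow> ('w \<Rightarrow> 'a) \<Rightarrow> ('w \<Rightarrow> 'b) \<Rightarrow> ('w \<Rightarrow> 'c) \<Rightarrow> real" where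
  "cmi b \<mu> X Y Z = H b \<mu> (\<lambda>w. (X w, Z w)) + H b \<mu> (\<lambda>w. (Y w, Z w))
                    - H b \<mu> (\<lambda>w. (X w, Y w, Z w)) - H b \<mu> Z"

definition joint :: "('f, 'm) ring_scheme \<Rightarrow> nat \<Rightarrow> nat \<Rightarrow> nat pmf \<Rightarrow> ((nat \<Rightarrow> 'f list) \<times> nat) pmf" where
  "joint F K L P = pair_pmf (pmf_of_set (msgspace F K L)) P"

text \<open>A secure scheme: assignment Z (server n < N gets datasets Z n \<subseteq> {..<K}, |Z n| \<le> M);
  common randomness Q with finite-support distribution P (servers indexed in nat);
  transmission of server n is psi n W s \<in> F^(T n), depending only on (W_k)_{k \<in> Z n} and s;
  decodability from any Nr servers; security I(W; X_1..X_N | sum W) = 0 (q-ary units).\<close>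
definition secure_scheme ::
  "('f, 'm) ring_scheme \<Rightarrow> nat \<Rightarrow> nat \<Rightarrow> nat \<Rightarrow> nat \<Rightarrow> nat \<Rightarrow>
   (nat \<Rightarrow> nat set) \<Rightarrow> nat pmf \<Rightarrow> (nat \<Rightarrow> nat) \<Rightarrow> (nat \<Rightarrow> (nat \<Rightarrow> 'f list) \<Rightarrow> nat \<Rightarrow> 'f list) \<Rightarrow> bool" where
  "secure_scheme F K N Nr M L Z P T psi \<longleftrightarrow>
     (\<forall>n<N. Z n \<subseteq> {..<K} \<and> card (Z n) \<le> M) \<and>
     finite (set_pmf P) \<and>
     (\<forall>n<N. \<forall>W\<in>msgspace F K L. \<forall>W'\<in>msgspace F K L. \<forall>s.
        (\<forall>k\<in>Z n. W k = W' k) \<longrightarrow> psi n W s = psi n W' s) \<and>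
     (\<forall>n<N. \<forall>W\<in>msgspace F K L. \<forall>s\<in>set_pmf P. psi n W s \<in> fvec F (T n)) \<and>
     (\<forall>A. A \<subseteq> {..<N} \<and> card A = Nr \<longrightarrow>
        (\<exists>dec. \<forall>W\<in>msgspace F K L. \<forall>s\<in>set_pmf P.
            dec (restrict (\<lambda>n. psi n W s) A) = msum F K L W)) \<and>
     cmi (real (card (carrier F))) (joint F K L P)
        (\<lambda>\<omega>. fst \<omega>)
        (\<lambda>\<omega>. restrict (\<lambda>n. psi n (fst \<omega>) (snd \<omega>)) {..<N})
        (\<lambda>\<omega>. msum F K L (fst \<omega>)) = 0"

definition comm_cost :: "nat \<Rightarrow> nat \<Rightarrow> nat \<Rightarrow> (nat \<Rightarrow> nat) \<Rightarrow> real" where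
  "comm_cost N Nr L T = real (Max {(\<Sum>n\<in>A. T n) | A. A \<subseteq> {..<N} \<and> card A = Nr}) / real L"

definition rand_size :: "('f, 'm) ring_scheme \<Rightarrow> nat \<Rightarrow> nat pmf \<Rightarrow> real" where
  "rand_size F L P = ent (real (card (carrier F))) P / real L"

definition R_star :: "('f, 'm) ring_scheme \<Rightarrow> nat \<Rightarrow> nat \<Rightarrow> nat \<Rightarrow> nat \<Rightarrow> nat \<Rightarrow> real" where
  "R_star F K N Nr M L = Inf {comm_cost N Nr L T | Z P T psi. secure_scheme F K N Nr M L Z P T psi}"

end

theory Submission
  imports Defs
begin

lemma ent_alt: "ent b p = (\<Sum>x\<in>set_pmf p. pmf p x * (- log b (pmf p x)))"
  unfolding ent_def by (simp add: sum_negf)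

lemma pmf_map_fin:
  assumes "finite (set_pmf p)"
  shows "pmf (map_pmf f p) y = sum (pmf p) {x \<in> set_pmf p. f x = y}"
proof -
  have "pmf (map_pmf f p) y = measure p (f -` {y} \<inter> set_pmf p)"
    by (simp add: pmf_map measure_Int_set_pmf)
  also have "f -` {y} \<inter> set_pmf p = {x \<in> set_pmf p. f x = y}" by auto
  also have "measure p \<dots> = sum (pmf p) {x \<in> set_pmf p. f x = y}"
    using assms by (intro measure_measure_pmf_finite) auto
  finally show ?thesis .
qed

lemma ent_map_le:
  assumes fin: "finite (set_pmf p)" and b: "1 < b"
  shows "ent b (map_pmf f p) \<le> ent b p"
proof -
  define S where "S = set_pmf p"
  define pm where "pm y = sum (pmf p) {x \<in> S. f x = y}" for y
  have pmeq: "pmf (map_pmf f p) y = pm y" for y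
    using pmf_map_fin[OF fin] unfolding pm_def S_def by simp
  have le: "pmf p x \<le> pm (f x)" if "x \<in> S" for x
    unfolding pm_def
    by (rule member_le_sum[where f="pmf p" and i=x]) (use that fin S_def in auto)
  have "ent b (map_pmf f p) = (\<Sum>y\<in>f ` S. pm y * (- log b (pm y)))"
    by (simp add: ent_alt pmeq S_def)
  also have "\<dots> = (\<Sum>y\<in>f ` S. \<Sum>x\<in>{x \<in> S. f x = y}. pmf p x * (- log b (pm y)))"
    unfolding pm_def by (simp add: sum_distrib_right sum_negf)
  also have "\<dots> = (\<Sum>y\<in>f ` S. \<Sum>x\<in>{x \<in> S. f x = y}. pmf p x * (- log b (pm (f x))))"
    by (intro sum.cong refl) auto
  also have "\<dots> = (\<Sum>x\<in>S. pmf p x * (- log b (pm (f x))))"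
    by (rule sum.image_gen[symmetric]) (use fin S_def in auto)
  also have "\<dots> \<le> (\<Sum>x\<in>S. pmf p x * (- log b (pmf p x)))"
  proof (rule sum_mono)
    fix x assume x: "x \<in> S"
    have pos: "0 < pmf p x" using x S_def by (simp add: pmf_positive)
    have "log b (pmf p x) \<le> log b (pm (f x))"
      using pos le[OF x] b by (simp add: log_le_cancel_iff)
    then show "pmf p x * (- log b (pm (f x))) \<le> pmf p x * (- log b (pmf p x))"
      using pos by (intro mult_left_mono) auto
  qed
  also have "\<dots> = ent b p" by (simp add: ent_alt S_def)
  finally show ?thesis .
qed

lemma ent_pair:
  assumes fp: "finite (set_pmf p)" and fq: "finite (set_pmf q)"
  shows "ent b (pair_pmf p q) = ent b p + ent b q"
proof -
  let ?A = "set_pmf p" and ?C = "set_pmf q"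
  have s1: "(\<Sum>x\<in>?A. pmf p x) = 1" using fp by (simp add: sum_pmf_eq_1)
  have s2: "(\<Sum>x\<in>?C. pmf q x) = 1" using fq by (simp add: sum_pmf_eq_1)
  define lp where "lp a = pmf p a * (- log b (pmf p a))" for a
  define lq where "lq a = pmf q a * (- log b (pmf q a))" for a
  have "ent b (pair_pmf p q) = (\<Sum>(a,c)\<in>?A \<times> ?C. pmf p a * pmf q c * (- log b (pmf p a * pmf q c)))"
    unfolding ent_alt by (auto intro!: sum.cong simp: pmf_pair)
  also have "\<dots> = (\<Sum>a\<in>?A. \<Sum>c\<in>?C. pmf p a * pmf q c * (- log b (pmf p a * pmf q c)))"
    by (rule sum.cartesian_product[symmetric])
  also have "\<dots> = (\<Sum>a\<in>?A. \<Sum>c\<in>?C. pmf q c * lp a + pmf p a * lq c)"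
    unfolding lp_def lq_def
    by (intro sum.cong refl) (simp add: log_mult pmf_positive algebra_simps)
  also have "\<dots> = (\<Sum>a\<in>?A. (\<Sum>c\<in>?C. pmf q c) * lp a + pmf p a * (\<Sum>c\<in>?C. lq c))"
    by (simp only: sum.distrib flip: sum_distrib_left sum_distrib_right)
  also have "\<dots> = (\<Sum>a\<in>?A. lp a) + (\<Sum>a\<in>?A. pmf p a) * (\<Sum>c\<in>?C. lq c)"
    by (simp only: s2 sum.distrib mult_1 flip: sum_distrib_right)
  also have "\<dots> = ent b p + ent b q"
    by (simp only: s1 mult_1 ent_alt lp_def lq_def)
  finally show ?thesis .
qed

lemma ent_uniform:
  assumes "finite A" "A \<noteq> {}"
  shows "ent b (pmf_of_set A) = log b (card A)"
proof -
  have c: "0 < card A" using assms by (simp add: card_gt_0_iff)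
  have "ent b (pmf_of_set A) = (\<Sum>x\<in>A. (1 / card A) * (- log b (1 / card A)))"
    using assms by (simp add: ent_alt)
  also have "\<dots> = log b (card A)" using c by (simp add: log_divide)
  finally show ?thesis .
qed

lemma log_le_lin: assumes "1 < b" "0 < y" shows "log b y \<le> (y - 1) / ln b"
proof -
  have "ln y \<le> y - 1" using assms by (simp add: ln_le_minus_one)
  moreover have "0 < ln b" using assms by simp
  ultimately show ?thesis unfolding log_def by (simp add: divide_right_mono)
qed

lemma ent_le_log_card:
  assumes fin: "finite (set_pmf p)" and b: "1 < b" and n: "card (set_pmf p) \<le> n" "0 < n"
  shows "ent b p \<le> log b n"
proof -
  let ?S = "set_pmf p"
  have s1: "(\<Sum>x\<in>?S. pmf p x) = 1" using fin by (simp add: sum_pmf_eq_1)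
  have lb: "0 < ln b" using b by simp
  have "ent b p - log b n = (\<Sum>x\<in>?S. pmf p x * (- log b (pmf p x))) - (\<Sum>x\<in>?S. pmf p x) * log b n"
    by (simp add: ent_alt s1)
  also have "\<dots> = (\<Sum>x\<in>?S. pmf p x * log b (1 / (pmf p x * n)))"
    unfolding sum_distrib_right sum_subtractf[symmetric]
    using n by (intro sum.cong refl) (simp add: log_divide log_mult pmf_positive algebra_simps)
  also have "\<dots> \<le> (\<Sum>x\<in>?S. pmf p x * ((1 / (pmf p x * n) - 1) / ln b))"
    using n b by (intro sum_mono mult_left_mono log_le_lin) (auto simp: set_pmf_iff)
  also have "\<dots> = (\<Sum>x\<in>?S. (1 / n - pmf p x) / ln b)"
    using n b by (intro sum.cong refl) (auto simp: set_pmf_iff field_simps)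
  also have "\<dots> = (card ?S / n - 1) / ln b"
    by (simp add: sum_divide_distrib[symmetric] sum_subtractf s1)
  also have "\<dots> \<le> 0" using n lb by (simp add: divide_nonpos_pos)
  finally show ?thesis by simp
qed

lemma ent_ge_minlog:
  assumes fin: "finite (set_pmf p)" and b: "1 < b" and c: "\<And>x. pmf p x \<le> c"
  shows "- log b c \<le> ent b p"
proof -
  let ?S = "set_pmf p"
  have s1: "(\<Sum>x\<in>?S. pmf p x) = 1" using fin by (simp add: sum_pmf_eq_1)
  have "- log b c = (\<Sum>x\<in>?S. pmf p x * (- log b c))"
    by (simp add: sum_negf sum_distrib_right[symmetric] s1)
  also have "\<dots> \<le> (\<Sum>x\<in>?S. pmf p x * (- log b (pmf p x)))"
  proof (rule sum_mono)
    fix x assume x: "x \<in> ?S"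
    have pos: "0 < pmf p x" using x by (simp add: pmf_positive)
    have "log b (pmf p x) \<le> log b c" using pos c[of x] b by (simp add: log_le_cancel_iff)
    then show "pmf p x * (- log b c) \<le> pmf p x * (- log b (pmf p x))"
      using pos by (intro mult_left_mono) auto
  qed
  also have "\<dots> = ent b p" by (simp add: ent_alt)
  finally show ?thesis .
qed

lemma ring_rcancel:
  assumes "ring F" "a \<in> carrier F" "b \<in> carrier F" "c \<in> carrier F"
    "a \<oplus>\<^bsub>F\<^esub> c = b \<oplus>\<^bsub>F\<^esub> c"
  shows "a = b"
proof -
  interpret ring F by fact
  show ?thesis using assms by simp
qed

lemma ring_aclosed:
  assumes "ring F" "a \<in> carrier F" "b \<in> carrier F"
  shows "a \<oplus>\<^bsub>F\<^esub> b \<in> carrier F"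
proof -
  interpret ring F by fact
  show ?thesis using assms by simp
qed

lemma ring_zero: "ring F \<Longrightarrow> \<zero>\<^bsub>F\<^esub> \<in> carrier F"
  using ring.ring_simprules(2) by blast

lemma vadd_closed:
  assumes "ring F" "u \<in> fvec F L" "v \<in> fvec F L"
  shows "vadd F u v \<in> fvec F L"
  using assms unfolding fvec_def vadd_def
  by (auto simp: set_zip intro!: ring_aclosed[OF assms(1)])

lemma vadd_cancel:
  assumes R: "ring F" and "u \<in> fvec F L" "v \<in> fvec F L" "w \<in> fvec F L"
    and eq: "vadd F u w = vadd F v w"
  shows "u = v"
proof (rule nth_equalityI)
  show "length u = length v" using assms by (simp add: fvec_def)
  fix i assume i: "i < length u"
  have "vadd F u w ! i = vadd F v w ! i" using eq by simp
  moreover have "vadd F u w ! i = u ! i \<oplus>\<^bsub>F\<^esub> w ! i"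
    using assms(2-4) i by (simp add: vadd_def fvec_def)
  moreover have "vadd F v w ! i = v ! i \<oplus>\<^bsub>F\<^esub> w ! i"
    using assms(2-4) i by (simp add: vadd_def fvec_def)
  ultimately have "u ! i \<oplus>\<^bsub>F\<^esub> w ! i = v ! i \<oplus>\<^bsub>F\<^esub> w ! i" by simp
  moreover have "u ! i \<in> carrier F" "v ! i \<in> carrier F" "w ! i \<in> carrier F"
    using assms(2-4) i nth_mem[of i u] nth_mem[of i v] nth_mem[of i w] by (auto simp: fvec_def)
  ultimately show "u ! i = v ! i" using ring_rcancel[OF R] by blast
qed

lemma ring_lcancel:
  assumes "ring F" "a \<in> carrier F" "b \<in> carrier F" "c \<in> carrier F"
    "c \<oplus>\<^bsub>F\<^esub> a = c \<oplus>\<^bsub>F\<^esub> b"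
  shows "a = b"
proof -
  interpret ring F by fact
  show ?thesis using assms by simp
qed

lemma vadd_cancel2:
  assumes R: "ring F" and "u \<in> fvec F L" "v \<in> fvec F L" "w \<in> fvec F L"
    and eq: "vadd F w u = vadd F w v"
  shows "u = v"
proof (rule nth_equalityI)
  show "length u = length v" using assms by (simp add: fvec_def)
  fix i assume i: "i < length u"
  have "vadd F w u ! i = vadd F w v ! i" using eq by simp
  moreover have "vadd F w u ! i = w ! i \<oplus>\<^bsub>F\<^esub> u ! i"
    using assms(2-4) i by (simp add: vadd_def fvec_def)
  moreover have "vadd F w v ! i = w ! i \<oplus>\<^bsub>F\<^esub> v ! i"
    using assms(2-4) i by (simp add: vadd_def fvec_def)
  ultimately have "w ! i \<oplus>\<^bsub>F\<^esub> u ! i = w ! i \<oplus>\<^bsub>F\<^esub> v ! i" by simp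
  moreover have "u ! i \<in> carrier F" "v ! i \<in> carrier F" "w ! i \<in> carrier F"
    using assms(2-4) i nth_mem[of i u] nth_mem[of i v] nth_mem[of i w] by (auto simp: fvec_def)
  ultimately show "u ! i = v ! i" using ring_lcancel[OF R] by blast
qed

lemma foldr_closed:
  assumes "ring F" "\<forall>k\<in>set ks. W k \<in> fvec F L" "z \<in> fvec F L"
  shows "foldr (\<lambda>k acc. vadd F (W k) acc) ks z \<in> fvec F L"
  using assms(2,3) by (induction ks) (auto intro: vadd_closed[OF assms(1)])

lemma foldr_diff:
  assumes R: "ring F" and "distinct ks" "k \<in> set ks"
    and "\<forall>j\<in>set ks. j \<noteq> k \<longrightarrow> W j = W' j"
    and "\<forall>j\<in>set ks. W j \<in> fvec F L" "\<forall>j\<in>set ks. W' j \<in> fvec F L" "z \<in> fvec F L"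
    and "foldr (\<lambda>k acc. vadd F (W k) acc) ks z = foldr (\<lambda>k acc. vadd F (W' k) acc) ks z"
  shows "W k = W' k"
  using assms(2-)
proof (induction ks)
  case Nil then show ?case by simp
next
  case (Cons a ks)
  define r where "r = foldr (\<lambda>k acc. vadd F (W k) acc) ks z"
  define r' where "r' = foldr (\<lambda>k acc. vadd F (W' k) acc) ks z"
  have eq: "vadd F (W a) r = vadd F (W' a) r'" using Cons.prems(7) unfolding r_def r'_def by simp
  have rc: "r \<in> fvec F L" unfolding r_def using Cons.prems(4,6) by (intro foldr_closed[OF R]) auto
  have rc': "r' \<in> fvec F L" unfolding r'_def using Cons.prems(5,6) by (intro foldr_closed[OF R]) auto
  have Wa: "W a \<in> fvec F L" "W' a \<in> fvec F L" using Cons.prems(4,5) by auto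
  show ?case
  proof (cases "a = k")
    case True
    have kn: "k \<notin> set ks" using Cons.prems(1) True by simp
    have same: "r = r'" unfolding r_def r'_def
    proof (rule foldr_cong[OF refl refl])
      fix x acc assume "x \<in> set ks"
      then have "W x = W' x" using Cons.prems(3) kn by auto
      then show "vadd F (W x) acc = vadd F (W' x) acc" by simp
    qed
    have "W a = W' a" using vadd_cancel[OF R Wa rc'] eq same by simp
    then show ?thesis using True by simp
  next
    case False
    have "W a = W' a" using Cons.prems(3) False by auto
    then have "vadd F (W a) r = vadd F (W a) r'" using eq by simp
    then have "r = r'" using vadd_cancel2[OF R rc rc' Wa(1)] by simp
    then show ?thesis using Cons.IH Cons.prems False unfolding r_def r'_def by auto
  qed
qed

lemma zero_vec: assumes "ring F" shows "replicate L \<zero>\<^bsub>F\<^esub> \<in> fvec F L"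
  using ring_zero[OF assms] by (auto simp: fvec_def)

lemma msgspace_vec: "W \<in> msgspace F K L \<Longrightarrow> j < K \<Longrightarrow> W j \<in> fvec F L"
  unfolding msgspace_def by (auto simp: PiE_iff)

lemma msum_closed:
  assumes "ring F" "W \<in> msgspace F K L"
  shows "msum F K L W \<in> fvec F L"
  unfolding msum_def
  by (rule foldr_closed[OF assms(1)]) (use assms msgspace_vec zero_vec in auto)

lemma msum_diff:
  assumes R: "ring F" and "W \<in> msgspace F K L" "W' \<in> msgspace F K L" "k < K"
    and "\<forall>j<K. j \<noteq> k \<longrightarrow> W j = W' j" and "msum F K L W = msum F K L W'"
  shows "W k = W' k"
proof (rule foldr_diff[OF R, of "[0..<K]" k W W' L "replicate L \<zero>\<^bsub>F\<^esub>"])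
  show "distinct [0..<K]" by simp
  show "k \<in> set [0..<K]" using assms(4) by simp
  show "\<forall>j\<in>set [0..<K]. j \<noteq> k \<longrightarrow> W j = W' j" using assms(5) by simp
  show "\<forall>j\<in>set [0..<K]. W j \<in> fvec F L" using assms(2) msgspace_vec by auto
  show "\<forall>j\<in>set [0..<K]. W' j \<in> fvec F L" using assms(3) msgspace_vec by auto
  show "replicate L \<zero>\<^bsub>F\<^esub> \<in> fvec F L" using zero_vec[OF R] .
  show "foldr (\<lambda>k. vadd F (W k)) [0..<K] (replicate L \<zero>\<^bsub>F\<^esub>) =
    foldr (\<lambda>k. vadd F (W' k)) [0..<K] (replicate L \<zero>\<^bsub>F\<^esub>)"
    using assms(6) unfolding msum_def .
qed

lemma card_filter_sum:
  "finite A \<Longrightarrow> card {x\<in>A. P x} = (\<Sum>x\<in>A. if P x then 1 else (0::nat))"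
  using sum.inter_filter[of A "\<lambda>_. (1::nat)" P] by simp

lemma double_count:
  assumes "\<forall>n<N. Z n \<subseteq> {..<K::nat}"
  shows "(\<Sum>k<K. card {n\<in>{..<N::nat}. k \<in> Z n}) = (\<Sum>n<N. card (Z n))"
proof -
  have "(\<Sum>k<K. card {n\<in>{..<N}. k \<in> Z n}) = (\<Sum>k<K. \<Sum>n<N. if k \<in> Z n then 1 else 0)"
  proof (rule sum.cong[OF refl])
    fix k show "card {n\<in>{..<N}. k \<in> Z n} = (\<Sum>n<N. if k \<in> Z n then 1 else 0)"
      by (rule card_filter_sum) simp
  qed
  also have "\<dots> = (\<Sum>n<N. \<Sum>k<K. if k \<in> Z n then 1 else 0)" by (rule sum.swap)
  also have "\<dots> = (\<Sum>n<N. card (Z n))"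
  proof (rule sum.cong[OF refl])
    fix n assume "n \<in> {..<N}"
    then have "Z n = {k\<in>{..<K}. k \<in> Z n}" using assms by auto
    then show "(\<Sum>k<K. if k \<in> Z n then 1 else 0) = card (Z n)"
      using card_filter_sum[of "{..<K}" "\<lambda>k. k \<in> Z n"] by simp
  qed
  finally show ?thesis .
qed

lemma cover_lemma:
  fixes K N Nr M g :: nat
  assumes Zsub: "\<forall>n<N. Z n \<subseteq> {..<K} \<and> card (Z n) \<le> M"
    and hold: "\<forall>k<K. g \<le> card {n\<in>{..<N}. k \<in> Z n}"
    and g: "g = N - Nr + 1" and M: "M = K div N * g"
    and "N dvd K" "0 < K" "0 < Nr" "Nr \<le> N"
  shows "\<exists>D. D \<subseteq> {..<K} \<and> card D = nat \<lceil>real N / real g\<rceil> \<and>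
     (\<forall>k\<in>D. Nr \<le> card {n\<in>{..<N}. k \<notin> Z n \<or> (\<forall>j\<in>D. j \<in> Z n \<longrightarrow> j = k)})"
proof -
  define G where "G k = {n\<in>{..<N}. k \<in> Z n}" for k
  have N0: "0 < N" using assms by simp
  have NM: "N * M = K * g" using M \<open>N dvd K\<close> by simp
  have KN: "1 \<le> K div N" using \<open>N dvd K\<close> \<open>0 < K\<close> N0
    by (metis dvd_div_eq_0_iff less_one not_less div_greater_zero_iff dvd_imp_le)
  have g1: "1 \<le> g" using g by simp
  have M1: "1 \<le> M" using KN g1 M by simp
  have dc: "(\<Sum>k<K. card (G k)) = (\<Sum>n<N. card (Z n))"
    unfolding G_def using Zsub by (intro double_count) auto
  have s1: "(\<Sum>n<N. card (Z n)) \<le> N * M"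
    using sum_mono[of "{..<N}" "\<lambda>n. card (Z n)" "\<lambda>_. M"] Zsub by simp
  have s2: "K * g \<le> (\<Sum>k<K. card (G k))"
    using sum_mono[of "{..<K}" "\<lambda>_. g" "\<lambda>k. card (G k)"] hold G_def by simp
  have Gg: "card (G k) = g" if "k < K" for k
  proof (rule ccontr)
    assume "card (G k) \<noteq> g"
    then have "g < card (G k)" using hold that G_def by force
    then have "(\<Sum>k<K. g) < (\<Sum>k<K. card (G k))"
      using hold that G_def by (intro sum_strict_mono_ex1) auto
    then show False using dc s1 s2 NM by simp
  qed
  have ZM: "card (Z n) = M" if "n < N" for n
  proof (rule ccontr)
    assume "card (Z n) \<noteq> M"
    then have "card (Z n) < M" using Zsub that by force
    then have "(\<Sum>n<N. card (Z n)) < (\<Sum>n<N. M)"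
      using Zsub that by (intro sum_strict_mono_ex1) auto
    then show False using dc s1 s2 NM by simp
  qed
  have Zne: "\<exists>k<K. k \<in> Z n" if "n < N" for n
  proof -
    have "Z n \<noteq> {}" using ZM[OF that] M1 by auto
    then show ?thesis using Zsub that by blast
  qed
  define Pc where "Pc C \<longleftrightarrow> C \<subseteq> {..<K} \<and> (\<forall>n<N. \<exists>k\<in>C. k \<in> Z n)" for C
  have "Pc {..<K}" using Zne unfolding Pc_def by blast
  then obtain C where PC: "Pc C" and Cmin: "\<forall>C'. Pc C' \<longrightarrow> card C \<le> card C'"
    using ex_has_least_nat[of Pc "{..<K}" card] by blast
  have Csub: "C \<subseteq> {..<K}" and Ccov: "\<forall>n<N. \<exists>k\<in>C. k \<in> Z n" using PC Pc_def by auto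
  have finC: "finite C" using Csub finite_subset by blast
  have "{..<N} \<subseteq> (\<Union>k\<in>C. G k)" using Ccov G_def by auto
  then have "card {..<N} \<le> card (\<Union>k\<in>C. G k)"
    by (intro card_mono) (auto simp: finC G_def)
  also have "\<dots> \<le> (\<Sum>k\<in>C. card (G k))" using finC by (rule card_UN_le)
  also have "\<dots> = card C * g" using Gg Csub by (simp add: subset_iff)
  finally have NC: "N \<le> card C * g" by simp
  have priv: "\<exists>p<N. k \<in> Z p \<and> (\<forall>j\<in>C. j \<in> Z p \<longrightarrow> j = k)" if kC: "k \<in> C" for k
  proof (rule ccontr)
    assume np: "\<not> ?thesis"
    have "Pc (C - {k})" unfolding Pc_def
    proof (intro conjI allI impI)
      show "C - {k} \<subseteq> {..<K}" using Csub by auto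
      fix n assume n: "n < N"
      obtain j where j: "j \<in> C" "j \<in> Z n" using Ccov n by blast
      show "\<exists>k'\<in>C - {k}. k' \<in> Z n"
      proof (cases "j = k")
        case True then show ?thesis using np n j by blast
      next
        case False then show ?thesis using j by blast
      qed
    qed
    then have "card C \<le> card (C - {k})" using Cmin by blast
    moreover have "0 < card C" using finC kC card_gt_0_iff by blast
    then have "card (C - {k}) < card C" using finC kC by simp
    ultimately show False by simp
  qed
  define t where "t = nat \<lceil>real N / real g\<rceil>"
  have "real N / real g \<le> real (card C)"
    using NC g1 by (simp add: divide_le_eq of_nat_mult[symmetric] del: of_nat_mult)
  then have "\<lceil>real N / real g\<rceil> \<le> int (card C)" by (intro ceiling_le) simp
  then have tC: "t \<le> card C" unfolding t_def using nat_le_iff by blast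
  obtain D where DC: "D \<subseteq> C" and cD: "card D = t"
    using obtain_subset_with_card_n[OF tC] by metis
  have pool: "Nr \<le> card {n\<in>{..<N}. k \<notin> Z n \<or> (\<forall>j\<in>D. j \<in> Z n \<longrightarrow> j = k)}" if kD: "k \<in> D" for k
  proof -
    obtain p where p: "p < N" "k \<in> Z p" "\<forall>j\<in>C. j \<in> Z p \<longrightarrow> j = k" using priv kD DC by blast
    let ?P = "{n\<in>{..<N}. k \<notin> Z n \<or> (\<forall>j\<in>D. j \<in> Z n \<longrightarrow> j = k)}"
    have "{..<N} \<subseteq> ?P \<union> (G k - {p})"
      using p DC unfolding G_def by auto
    then have "card {..<N} \<le> card (?P \<union> (G k - {p}))" by (intro card_mono) (auto simp: G_def)
    also have "\<dots> \<le> card ?P + card (G k - {p})" by (rule card_Un_le)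
    also have "card (G k - {p}) = g - 1"
      using Gg[of k] kD DC Csub p by (auto simp: G_def)
    finally have "N \<le> card ?P + (g - 1)" by simp
    then show ?thesis using g \<open>Nr \<le> N\<close> by linarith
  qed
  have "D \<subseteq> {..<K}" using DC Csub by blast
  then show ?thesis
    using cD pool unfolding t_def by blast
qed

lemma field_ring: "field F \<Longrightarrow> ring F"
  by (simp add: field_def domain_def cring_def)

lemma fvec_eq: "fvec F L = {xs. set xs \<subseteq> carrier F \<and> length xs = L}"
  unfolding fvec_def by auto

lemma fvec_finite: "finite (carrier F) \<Longrightarrow> finite (fvec F L)"
  unfolding fvec_eq by (rule finite_lists_length_eq)

lemma fvec_card: "finite (carrier F) \<Longrightarrow> card (fvec F L) = card (carrier F) ^ L"
  unfolding fvec_eq by (rule card_lists_length_eq)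

lemma msgspace_finite: "finite (carrier F) \<Longrightarrow> finite (msgspace F K L)"
  unfolding msgspace_def by (intro finite_PiE) (auto simp: fvec_finite)

lemma msgspace_card: "finite (carrier F) \<Longrightarrow> card (msgspace F K L) = (card (carrier F) ^ L) ^ K"
  unfolding msgspace_def by (simp add: card_PiE fvec_card)

lemma zero_msg: "ring F \<Longrightarrow> (\<lambda>j\<in>{..<K}. replicate L \<zero>\<^bsub>F\<^esub>) \<in> msgspace F K L"
  unfolding msgspace_def using zero_vec by auto

lemma upd_msg:
  assumes "W \<in> msgspace F K L" "k < K" "v \<in> fvec F L"
  shows "W(k := v) \<in> msgspace F K L"
  using assms unfolding msgspace_def PiE_def extensional_def by auto

lemma ss_Z: "secure_scheme F K N Nr M L Z P T psi \<Longrightarrow> \<forall>n<N. Z n \<subseteq> {..<K} \<and> card (Z n) \<le> M"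
  unfolding secure_scheme_def by (elim conjE)

lemma ss_fin: "secure_scheme F K N Nr M L Z P T psi \<Longrightarrow> finite (set_pmf P)"
  unfolding secure_scheme_def by (elim conjE)

lemma ss_dep: "secure_scheme F K N Nr M L Z P T psi \<Longrightarrow> \<forall>n<N. \<forall>W\<in>msgspace F K L. \<forall>W'\<in>msgspace F K L. \<forall>s.
        (\<forall>k\<in>Z n. W k = W' k) \<longrightarrow> psi n W s = psi n W' s"
  unfolding secure_scheme_def by (elim conjE)

lemma ss_dec: "secure_scheme F K N Nr M L Z P T psi \<Longrightarrow> A \<subseteq> {..<N} \<Longrightarrow> card A = Nr \<Longrightarrow>
        (\<exists>dec. \<forall>W\<in>msgspace F K L. \<forall>s\<in>set_pmf P.
            dec (restrict (\<lambda>n. psi n W s) A) = msum F K L W)"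
proof -
  assume ss: "secure_scheme F K N Nr M L Z P T psi" and A: "A \<subseteq> {..<N}" "card A = Nr"
  have "\<forall>A. A \<subseteq> {..<N} \<and> card A = Nr \<longrightarrow>
        (\<exists>dec. \<forall>W\<in>msgspace F K L. \<forall>s\<in>set_pmf P.
            dec (restrict (\<lambda>n. psi n W s) A) = msum F K L W)"
    using ss unfolding secure_scheme_def by (elim conjE)
  then show ?thesis using A by blast
qed

lemma ss_sec: "secure_scheme F K N Nr M L Z P T psi \<Longrightarrow>
     cmi (real (card (carrier F))) (joint F K L P)
        (\<lambda>\<omega>. fst \<omega>)
        (\<lambda>\<omega>. restrict (\<lambda>n. psi n (fst \<omega>) (snd \<omega>)) {..<N})
        (\<lambda>\<omega>. msum F K L (fst \<omega>)) = 0"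
  unfolding secure_scheme_def by (elim conjE)

lemma holders:
  assumes F: "field F" and L: "0 < L" and ss: "secure_scheme F K N Nr M L Z P T psi"
    and NrN: "Nr \<le> N" and k: "k < K"
  shows "N - Nr + 1 \<le> card {n\<in>{..<N}. k \<in> Z n}"
proof (rule ccontr)
  have R: "ring F" using F by (rule field_ring)
  let ?G = "{n\<in>{..<N}. k \<in> Z n}"
  assume "\<not> ?thesis"
  then have "card ?G \<le> N - Nr" by simp
  moreover have "card ({..<N} - ?G) = N - card ?G" by (subst card_Diff_subset) auto
  ultimately have cG: "Nr \<le> card ({..<N} - ?G)" using NrN by linarith
  obtain A where A: "A \<subseteq> {..<N} - ?G" "card A = Nr"
    using obtain_subset_with_card_n[OF cG] by blast
  have dep: "\<forall>n<N. \<forall>W\<in>msgspace F K L. \<forall>W'\<in>msgspace F K L. \<forall>s.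
        (\<forall>k\<in>Z n. W k = W' k) \<longrightarrow> psi n W s = psi n W' s"
    using ss_dep[OF ss] .
  have "\<exists>dec. \<forall>W\<in>msgspace F K L. \<forall>s\<in>set_pmf P.
            dec (restrict (\<lambda>n. psi n W s) A) = msum F K L W"
    using ss_dec[OF ss] A by blast
  then obtain dec where dec: "\<forall>W\<in>msgspace F K L. \<forall>s\<in>set_pmf P.
            dec (restrict (\<lambda>n. psi n W s) A) = msum F K L W" by blast
  obtain s where s: "s \<in> set_pmf P" using set_pmf_not_empty by fast
  define W0 where "W0 = (\<lambda>j\<in>{..<K}. replicate L \<zero>\<^bsub>F\<^esub>)"
  define W1 where "W1 = W0(k := replicate L \<one>\<^bsub>F\<^esub>)"
  have W0: "W0 \<in> msgspace F K L" unfolding W0_def by (rule zero_msg[OF R])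
  have one: "\<one>\<^bsub>F\<^esub> \<in> carrier F" using R ring.ring_simprules(6) by blast
  have W1: "W1 \<in> msgspace F K L" unfolding W1_def
    by (rule upd_msg[OF W0 k]) (use one in \<open>auto simp: fvec_def\<close>)
  have "restrict (\<lambda>n. psi n W1 s) A = restrict (\<lambda>n. psi n W0 s) A"
  proof (rule restrict_ext)
    fix n assume n: "n \<in> A"
    then have nN: "n < N" and kZ: "k \<notin> Z n" using A by auto
    have ag: "\<forall>j\<in>Z n. W1 j = W0 j" using kZ unfolding W1_def by auto
    have "\<forall>W\<in>msgspace F K L. \<forall>W'\<in>msgspace F K L. \<forall>s.
        (\<forall>k\<in>Z n. W k = W' k) \<longrightarrow> psi n W s = psi n W' s" using dep nN by blast
    then show "psi n W1 s = psi n W0 s" using W0 W1 ag by blast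
  qed
  then have "msum F K L W1 = msum F K L W0" using dec W0 W1 s by metis
  then have "W1 k = W0 k"
    using msum_diff[OF R W1 W0 k] unfolding W1_def by auto
  then have "replicate L \<one>\<^bsub>F\<^esub> = replicate L \<zero>\<^bsub>F\<^esub>" unfolding W1_def W0_def using k by simp
  then have "\<one>\<^bsub>F\<^esub> = \<zero>\<^bsub>F\<^esub>" using L by (metis replicate_eq_replicate less_not_refl)
  then show False using F by (simp add: field_def domain_def domain_axioms_def)
qed

lemma inj_core:
  assumes R: "ring F" and ss: "secure_scheme F K N Nr M L Z P T psi" and DK: "D \<subseteq> {..<K}"
    and pool: "\<forall>k\<in>D. Nr \<le> card {n\<in>{..<N}. k \<notin> Z n \<or> (\<forall>j\<in>D. j \<in> Z n \<longrightarrow> j = k)}"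
    and s: "s \<in> set_pmf P" and W: "W \<in> msgspace F K L" and W': "W' \<in> msgspace F K L"
    and eqX: "\<forall>n<N. psi n W s = psi n W' s"
    and eqR: "\<forall>k\<in>{..<K} - D. W k = W' k"
  shows "W = W'"
proof -
  have Zs: "\<forall>n<N. Z n \<subseteq> {..<K} \<and> card (Z n) \<le> M" using ss_Z[OF ss] .
  have dep: "\<forall>n<N. \<forall>W\<in>msgspace F K L. \<forall>W'\<in>msgspace F K L. \<forall>s.
        (\<forall>k\<in>Z n. W k = W' k) \<longrightarrow> psi n W s = psi n W' s" using ss_dep[OF ss] .
  have eqD: "W k = W' k" if kD: "k \<in> D" for k
  proof -
    let ?P = "{n\<in>{..<N}. k \<notin> Z n \<or> (\<forall>j\<in>D. j \<in> Z n \<longrightarrow> j = k)}"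
    have cP: "Nr \<le> card ?P" using pool kD by blast
    obtain A where A: "A \<subseteq> ?P" "card A = Nr" using obtain_subset_with_card_n[OF cP] by blast
    have AN: "A \<subseteq> {..<N}" using A(1) by blast
    obtain dec where dec: "\<forall>W\<in>msgspace F K L. \<forall>s\<in>set_pmf P.
            dec (restrict (\<lambda>n. psi n W s) A) = msum F K L W"
      using ss_dec[OF ss AN A(2)] by blast
    have k: "k < K" using kD DK by blast
    define W'' where "W'' = W(k := W' k)"
    have W'': "W'' \<in> msgspace F K L" unfolding W''_def
      by (rule upd_msg[OF W k msgspace_vec[OF W' k]])
    have rr: "restrict (\<lambda>n. psi n W'' s) A = restrict (\<lambda>n. psi n W s) A"
    proof (rule restrict_ext)
      fix n assume nA: "n \<in> A"
      have nN: "n < N" and alt: "k \<notin> Z n \<or> (\<forall>j\<in>D. j \<in> Z n \<longrightarrow> j = k)"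
        using A(1) nA by auto
      have depn: "\<forall>W\<in>msgspace F K L. \<forall>W'\<in>msgspace F K L. \<forall>s.
        (\<forall>k\<in>Z n. W k = W' k) \<longrightarrow> psi n W s = psi n W' s" using dep nN by blast
      show "psi n W'' s = psi n W s"
      proof (cases "k \<in> Z n")
        case False
        have "\<forall>j\<in>Z n. W'' j = W j" using False unfolding W''_def by auto
        then show ?thesis using depn W'' W by blast
      next
        case True
        then have nd: "\<forall>j\<in>D. j \<in> Z n \<longrightarrow> j = k" using alt by blast
        have ZK: "Z n \<subseteq> {..<K}" using Zs nN by blast
        have "\<forall>j\<in>Z n. W'' j = W' j"
        proof
          fix j assume j: "j \<in> Z n"
          show "W'' j = W' j"
          proof (cases "j = k")
            case True then show ?thesis unfolding W''_def by simp
          next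
            case False
            then have "j \<notin> D" using nd j by blast
            moreover have "j < K" using ZK j by blast
            ultimately have "W j = W' j" using eqR by blast
            then show ?thesis using False unfolding W''_def by simp
          qed
        qed
        then have "psi n W'' s = psi n W' s" using depn W'' W' by blast
        also have "\<dots> = psi n W s" using eqX nN by simp
        finally show ?thesis .
      qed
    qed
    have d1: "dec (restrict (\<lambda>n. psi n W'' s) A) = msum F K L W''" using dec W'' s by blast
    have d2: "dec (restrict (\<lambda>n. psi n W s) A) = msum F K L W" using dec W s by blast
    have "msum F K L W'' = msum F K L W" using d1 d2 rr by simp
    moreover have "\<forall>j<K. j \<noteq> k \<longrightarrow> W'' j = W j" unfolding W''_def by simp
    ultimately have "W'' k = W k" using msum_diff[OF R W'' W k] by blast
    then show "W k = W' k" unfolding W''_def by simp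
  qed
  show "W = W'"
  proof (rule ext)
    fix j show "W j = W' j"
    proof (cases "j < K")
      case True then show ?thesis using eqD eqR by (cases "j \<in> D") auto
    next
      case False
      then have "W j = undefined" "W' j = undefined"
        using W W' unfolding msgspace_def by (auto simp: PiE_def extensional_def)
      then show ?thesis by simp
    qed
  qed
qed

lemma pmf_bound:
  assumes R: "ring F" and fin: "finite (carrier F)" and ss: "secure_scheme F K N Nr M L Z P T psi"
    and DK: "D \<subseteq> {..<K}" and cD: "card D = t"
    and pool: "\<forall>k\<in>D. Nr \<le> card {n\<in>{..<N}. k \<notin> Z n \<or> (\<forall>j\<in>D. j \<in> Z n \<longrightarrow> j = k)}"
  shows "pmf (map_pmf (\<lambda>\<omega>. (restrict (\<lambda>n. psi n (fst \<omega>) (snd \<omega>)) {..<N}, msum F K L (fst \<omega>)))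
            (joint F K L P)) z \<le> 1 / real (card (carrier F)) ^ (t * L)"
proof -
  define MS where "MS = msgspace F K L"
  define f where "f = (\<lambda>\<omega>. (restrict (\<lambda>n. psi n (fst \<omega>) (snd \<omega>)) {..<N}, msum F K L (fst \<omega>)))"
  define \<mu> where "\<mu> = joint F K L P"
  define q where "q = card (carrier F)"
  define Rs where "Rs = {..<K} - D"
  define h where "h = (\<lambda>\<omega>::(nat \<Rightarrow> 'a list) \<times> nat. (restrict (fst \<omega>) Rs, snd \<omega>))"
  have finMS: "finite MS" unfolding MS_def using msgspace_finite[OF fin] .
  have neMS: "MS \<noteq> {}" unfolding MS_def using zero_msg[OF R] by blast
  have finP: "finite (set_pmf P)" using ss_fin[OF ss] .
  have setmu: "set_pmf \<mu> = MS \<times> set_pmf P" unfolding \<mu>_def joint_def MS_def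
    using finMS neMS unfolding MS_def by simp
  have finmu: "finite (set_pmf \<mu>)" using setmu finMS finP by simp
  have pmfmu: "pmf \<mu> \<omega> = pmf P (snd \<omega>) / card MS" if "\<omega> \<in> MS \<times> set_pmf P" for \<omega>
    using that finMS neMS unfolding \<mu>_def joint_def MS_def by (cases \<omega>) (simp add: pmf_pair)
  define E where "E = {\<omega> \<in> set_pmf \<mu>. f \<omega> = z}"
  have EMS: "E \<subseteq> MS \<times> set_pmf P" unfolding E_def using setmu by blast
  have finE: "finite E" using finmu unfolding E_def by simp
  have inj: "inj_on h E"
  proof (rule inj_onI)
    fix a b assume a: "a \<in> E" and b: "b \<in> E" and hab: "h a = h b"
    obtain W s where ab1: "a = (W, s)" by (cases a)
    obtain W' s' where ab2: "b = (W', s')" by (cases b)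
    have Ws: "W \<in> MS" "s \<in> set_pmf P" "W' \<in> MS" "s' \<in> set_pmf P"
      using a b EMS ab1 ab2 by auto
    have ss': "s = s'" and rW: "restrict W Rs = restrict W' Rs"
      using hab unfolding h_def ab1 ab2 by auto
    have fab: "f (W, s) = f (W', s)" using a b ss' unfolding E_def ab1 ab2 by simp
    then have rX: "restrict (\<lambda>n. psi n W s) {..<N} = restrict (\<lambda>n. psi n W' s) {..<N}"
      unfolding f_def by simp
    have eqX: "\<forall>n<N. psi n W s = psi n W' s"
    proof (intro allI impI)
      fix n assume "n < N"
      then show "psi n W s = psi n W' s" using fun_cong[OF rX, of n] by simp
    qed
    have eqR: "\<forall>k\<in>{..<K} - D. W k = W' k"
    proof
      fix k assume "k \<in> {..<K} - D"
      then show "W k = W' k" using fun_cong[OF rW, of k] unfolding Rs_def by simp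
    qed
    have "W = W'"
      by (rule inj_core[OF R ss DK pool Ws(2) _ _ eqX eqR]) (use Ws in \<open>simp_all add: MS_def\<close>)
    then show "a = b" using ab1 ab2 ss' by simp
  qed
  define PR where "PR = PiE Rs (\<lambda>_. fvec F L)"
  have finPR: "finite PR" unfolding PR_def Rs_def by (intro finite_PiE) (auto simp: fvec_finite[OF fin])
  have hE: "h ` E \<subseteq> PR \<times> set_pmf P"
  proof
    fix y assume "y \<in> h ` E"
    then obtain W s where Ws: "(W, s) \<in> E" and y: "y = h (W, s)" by auto
    have "W \<in> MS" "s \<in> set_pmf P" using Ws EMS by auto
    then have "restrict W Rs \<in> PR" unfolding PR_def MS_def Rs_def
      using msgspace_vec by (auto simp: restrict_PiE_iff)
    then show "y \<in> PR \<times> set_pmf P" using y \<open>s \<in> set_pmf P\<close> unfolding h_def by simp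
  qed
  have "pmf (map_pmf f \<mu>) z = sum (pmf \<mu>) E" unfolding E_def by (rule pmf_map_fin[OF finmu])
  also have "\<dots> = (\<Sum>\<omega>\<in>E. pmf P (snd \<omega>) / card MS)"
    by (rule sum.cong[OF refl]) (use pmfmu EMS in blast)
  also have "\<dots> = (\<Sum>y\<in>h ` E. pmf P (snd y) / card MS)"
    using sum.reindex[OF inj, of "\<lambda>y. pmf P (snd y) / card MS"] by (simp add: h_def o_def)
  also have "\<dots> \<le> (\<Sum>y\<in>PR \<times> set_pmf P. pmf P (snd y) / card MS)"
    by (rule sum_mono2) (use finPR finP hE in auto)
  also have "\<dots> = (\<Sum>a\<in>PR. \<Sum>c\<in>set_pmf P. pmf P c / card MS)"
    by (subst sum.cartesian_product) (simp add: case_prod_beta)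
  also have "\<dots> = (\<Sum>a\<in>PR. 1 / card MS)"
    by (simp add: sum_divide_distrib[symmetric] sum_pmf_eq_1[OF finP])
  also have "\<dots> = card PR / card MS" by simp
  also have "card PR = (q ^ L) ^ (K - t)"
    unfolding PR_def Rs_def q_def using DK cD
    by (simp add: card_PiE fvec_card[OF fin] card_Diff_subset finite_subset)
  also have "card MS = (q ^ L) ^ K" unfolding MS_def q_def by (rule msgspace_card[OF fin])
  also have "real ((q ^ L) ^ (K - t)) / real ((q ^ L) ^ K) = 1 / real q ^ (t * L)"
  proof -
    have tK: "t \<le> K" using DK cD card_mono[of "{..<K}" D] by simp
    have q0: "0 < q" unfolding q_def using fin R ring_zero[OF R] card_gt_0_iff by blast
    have "(q ^ L) ^ K = (q ^ L) ^ (K - t) * (q ^ L) ^ t"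
      using tK by (simp flip: power_add)
    moreover have "(q ^ L) ^ t = q ^ (t * L)" by (simp add: power_mult mult.commute)
    ultimately show ?thesis using q0 by (simp add: field_simps)
  qed
  finally show ?thesis unfolding f_def \<mu>_def q_def .
qed

lemma main_bound:
  fixes K N Nr M :: nat and F :: "'f ring"
  assumes K0: "0 < K" and Nr0: "0 < Nr" and NrN: "Nr \<le> N" and dvd: "N dvd K"
    and M: "M = (K div N) * (N - Nr + 1)"
    and F: "field F" and fin: "finite (carrier F)" and L: "0 < L"
    and ss: "secure_scheme F K N Nr M L Z P T psi"
  shows "real_of_int (\<lceil>real N / real (N - Nr + 1)\<rceil> - 1) \<le> rand_size F L P"
proof -
  have R: "ring F" using F by (rule field_ring)
  define q where "q = card (carrier F)"
  define b where "b = real q"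
  have zo: "\<zero>\<^bsub>F\<^esub> \<in> carrier F" "\<one>\<^bsub>F\<^esub> \<in> carrier F"
    using R ring.ring_simprules(2,6) by blast+
  have ne: "\<one>\<^bsub>F\<^esub> \<noteq> \<zero>\<^bsub>F\<^esub>" using F by (simp add: field_def domain_def domain_axioms_def)
  have "card {\<zero>\<^bsub>F\<^esub>, \<one>\<^bsub>F\<^esub>} \<le> q" unfolding q_def using zo fin by (intro card_mono) auto
  then have q2: "2 \<le> q" using ne by simp
  have b1: "1 < b" unfolding b_def using q2 by simp
  have hold: "\<forall>k<K. N - Nr + 1 \<le> card {n\<in>{..<N}. k \<in> Z n}"
    using holders[OF F L ss NrN] by blast
  obtain D where DK: "D \<subseteq> {..<K}" and cD: "card D = nat \<lceil>real N / real (N - Nr + 1)\<rceil>"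
    and pool: "\<forall>k\<in>D. Nr \<le> card {n\<in>{..<N}. k \<notin> Z n \<or> (\<forall>j\<in>D. j \<in> Z n \<longrightarrow> j = k)}"
    using cover_lemma[OF ss_Z[OF ss] hold refl M dvd K0 Nr0 NrN] by blast
  define t where "t = nat \<lceil>real N / real (N - Nr + 1)\<rceil>"
  have ct: "real t = real_of_int \<lceil>real N / real (N - Nr + 1)\<rceil>"
    unfolding t_def by (rule of_nat_nat) (simp add: zero_le_ceiling less_le_trans[OF _ divide_nonneg_nonneg])
  define MS where "MS = msgspace F K L"
  define \<mu> where "\<mu> = joint F K L P"
  have finMS: "finite MS" unfolding MS_def using msgspace_finite[OF fin] .
  have neMS: "MS \<noteq> {}" unfolding MS_def using zero_msg[OF R] by blast
  have finP: "finite (set_pmf P)" using ss_fin[OF ss] .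
  have setmu: "set_pmf \<mu> = MS \<times> set_pmf P" unfolding \<mu>_def joint_def MS_def
    using finMS neMS unfolding MS_def by simp
  have finmu: "finite (set_pmf \<mu>)" using setmu finMS finP by simp
  have entMS: "ent b (pmf_of_set MS) = real K * real L"
  proof -
    have "ent b (pmf_of_set MS) = log b (real (card MS))" using ent_uniform[OF finMS neMS] .
    also have "real (card MS) = b ^ (L * K)"
      unfolding MS_def b_def q_def msgspace_card[OF fin] by (simp add: power_mult)
    also have "log b (b ^ (L * K)) = real (L * K)" using b1 by (simp add: log_nat_power)
    finally show ?thesis by simp
  qed
  define f2 where "f2 = (\<lambda>\<omega>::(nat \<Rightarrow> 'f list) \<times> nat. (restrict (\<lambda>n. psi n (fst \<omega>) (snd \<omega>)) {..<N}, msum F K L (fst \<omega>)))"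
  have HYZ: "real t * real L \<le> ent b (map_pmf f2 \<mu>)"
  proof -
    have "- log b (1 / real q ^ (t * L)) \<le> ent b (map_pmf f2 \<mu>)"
      unfolding b_def
      by (rule ent_ge_minlog) (use finmu b1 b_def pmf_bound[OF R fin ss DK cD[folded t_def] pool] in
          \<open>auto simp: f2_def \<mu>_def q_def\<close>)
    moreover have "- log b (1 / real q ^ (t * L)) = real t * real L"
      using b1 unfolding b_def by (simp add: log_divide log_nat_power)
    ultimately show ?thesis by simp
  qed
  define f1 where "f1 = (\<lambda>\<omega>::(nat \<Rightarrow> 'f list) \<times> nat. (fst \<omega>, msum F K L (fst \<omega>)))"
  have HXZ: "real K * real L \<le> ent b (map_pmf f1 \<mu>)"
  proof -
    have "ent b (map_pmf fst (map_pmf f1 \<mu>)) \<le> ent b (map_pmf f1 \<mu>)"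
      by (rule ent_map_le) (use finmu b1 in auto)
    moreover have "map_pmf fst (map_pmf f1 \<mu>) = pmf_of_set MS"
      unfolding f1_def \<mu>_def joint_def MS_def by (simp add: pmf.map_comp o_def map_fst_pair_pmf)
    ultimately show ?thesis using entMS by simp
  qed
  define f3 where "f3 = (\<lambda>\<omega>::(nat \<Rightarrow> 'f list) \<times> nat. (fst \<omega>, restrict (\<lambda>n. psi n (fst \<omega>) (snd \<omega>)) {..<N}, msum F K L (fst \<omega>)))"
  have HXYZ: "ent b (map_pmf f3 \<mu>) \<le> real K * real L + ent b P"
  proof -
    have "ent b (map_pmf f3 \<mu>) \<le> ent b \<mu>" by (rule ent_map_le) (use finmu b1 in auto)
    also have "ent b \<mu> = ent b (pmf_of_set MS) + ent b P"
      unfolding \<mu>_def joint_def MS_def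
      by (rule ent_pair) (use finMS neMS finP in \<open>auto simp: MS_def\<close>)
    finally show ?thesis using entMS by simp
  qed
  define f4 where "f4 = (\<lambda>\<omega>::(nat \<Rightarrow> 'f list) \<times> nat. msum F K L (fst \<omega>))"
  have HZ: "ent b (map_pmf f4 \<mu>) \<le> real L"
  proof -
    have sub: "set_pmf (map_pmf f4 \<mu>) \<subseteq> fvec F L"
      using setmu msum_closed[OF R] unfolding f4_def MS_def by auto
    have cf: "card (fvec F L) = q ^ L" unfolding q_def by (rule fvec_card[OF fin])
    have "card (set_pmf (map_pmf f4 \<mu>)) \<le> q ^ L"
      using card_mono[OF fvec_finite[OF fin] sub] cf by simp
    then have "ent b (map_pmf f4 \<mu>) \<le> log b (real (q ^ L))"
      by (intro ent_le_log_card) (use finmu b1 q2 in auto)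
    also have "log b (real (q ^ L)) = real L" using b1 unfolding b_def by (simp add: log_nat_power)
    finally show ?thesis .
  qed
  have sec: "cmi b \<mu> (\<lambda>\<omega>. fst \<omega>) (\<lambda>\<omega>. restrict (\<lambda>n. psi n (fst \<omega>) (snd \<omega>)) {..<N})
        (\<lambda>\<omega>. msum F K L (fst \<omega>)) = 0"
    using ss_sec[OF ss] unfolding b_def q_def \<mu>_def .
  then have "ent b (map_pmf f1 \<mu>) + ent b (map_pmf f2 \<mu>) - ent b (map_pmf f3 \<mu>) - ent b (map_pmf f4 \<mu>) = 0"
    unfolding cmi_def H_def f1_def f2_def f3_def f4_def .
  then have "real t * real L \<le> ent b P + real L" using HYZ HXZ HXYZ HZ by linarith
  then have "(real t - 1) * real L \<le> ent b P" by (simp add: algebra_simps)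
  then have "real t - 1 \<le> ent b P / real L" using L by (simp add: pos_le_divide_eq)
  then show ?thesis unfolding rand_size_def using ct b_def q_def by simp
qed

theorem corollary2:
  fixes K N Nr M :: nat
  assumes "0 < K" "0 < Nr" "Nr \<le> N" "N dvd K"
    and "M = (K div N) * (N - Nr + 1)"
  shows "\<exists>q0::nat. \<forall>(F :: 'f ring) (L::nat) Z P T psi.
           field F \<and> finite (carrier F) \<and> q0 \<le> card (carrier F) \<and> 0 < L \<and>
           secure_scheme F K N Nr M L Z P T psi \<and>
           comm_cost N Nr L T = R_star F K N Nr M L
           \<longrightarrow> real_of_int (\<lceil>real N / real (N - Nr + 1)\<rceil> - 1) \<le> rand_size F L P"
  using main_bound[OF assms] by blast

end
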